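(* Let $p\ge 1$ and let $u,v,w\in E^p$. Then for every $\alpha\in[0,1]$, $$D(\alpha u+(1-\alpha)v,\,w)\le \sqrt{D(u,w)^2+D(v,w)^2}.$$
   Context: A fuzzy subset of $\mathbb{R}^p$ is a function $u:\mathbb{R}^p\to[0,1]$. Its $\alpha$-cut is $[u]_\alpha=\{x\in\mathbb{R}^p: u(x)\ge\alpha\}$ for $\alpha\in(0,1]$, and $[u]_0=\overline{\{x\in\mathbb{R}^p: u(x)>0\}}$. The set $E^p$ of $p$-dimensional fuzzy numbers consists of all fuzzy subsets $u$ of $\mathbb{R}^p$ such that $[u]_\alpha$ is a nonempty compact convex subset of $\mathbb{R}^p$ for every $\alpha\in[0,1]$. For $u,v\in E^p$ and $r\in\mathbb{R}$, $u+v$ and $r\cdot u$ are the elements of $E^p$ determined by $[u+v]_\alpha=\{x+y: x\in[u]_\alpha,\ y\in[v]_\alpha\}$ and $[r\cdot u]_\alpha=\{rx: x\in[u]_\alpha\}$ for all $\alpha\in[0,1]$. The sendograph of $u\in E^p$ is $\mathrm{send}\,u=\{(x,\alpha)\in[u]_0\times[0,1]: u(x)\ge\alpha\}\subset\mathbb{R}^{p+1}$, a nonempty compact set. For nonempty compact $U,V\subset\mathbb{R}^{p+1}$ (with the Euclidean metric $d$), the Hausdorff metric is $H(U,V)=\max\{H^*(U,V),H^*(V,U)\}$ with $H^*(U,V)=\sup_{a\in U}\inf_{b\in V}d(a,b)$. The sendograph metric on $E^p$ is $D(u,v)=H(\mathrm{send}\,u,\mathrm{send}\,v)$. *)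

theory Defs
  imports "HOL-Analysis.Analysis"
begin

text \<open>R^p is modelled by an arbitrary Euclidean space 'a (dimension DIM('a) \<ge> 1).
  A fuzzy subset is a function u :: 'a \<Rightarrow> real with values in [0,1].\<close>

definition fuzzy_subset :: "('a::euclidean_space \<Rightarrow> real) \<Rightarrow> bool" where
  "fuzzy_subset u \<longleftrightarrow> (\<forall>x. 0 \<le> u x \<and> u x \<le> 1)"

definition acut :: "('a::euclidean_space \<Rightarrow> real) \<Rightarrow> real \<Rightarrow> 'a set" where
  "acut u \<alpha> = (if \<alpha> = 0 then closure {x. u x > 0} else {x. u x \<ge> \<alpha>})"

definition fuzzy_numbers :: "('a::euclidean_space \<Rightarrow> real) set" where
  "fuzzy_numbers = {u. fuzzy_subset u \<and>
     (\<forall>\<alpha>\<in>{0..1}. acut u \<alpha> \<noteq> {} \<and> compact (acut u \<alpha>) \<and> convex (acut u \<alpha>))}"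

definition fadd :: "('a::euclidean_space \<Rightarrow> real) \<Rightarrow> ('a \<Rightarrow> real) \<Rightarrow> ('a \<Rightarrow> real)" where
  "fadd u v = (THE w. w \<in> fuzzy_numbers \<and>
      (\<forall>\<alpha>\<in>{0..1}. acut w \<alpha> = {x + y | x y. x \<in> acut u \<alpha> \<and> y \<in> acut v \<alpha>}))"

definition fscale :: "real \<Rightarrow> ('a::euclidean_space \<Rightarrow> real) \<Rightarrow> ('a \<Rightarrow> real)" where
  "fscale r u = (THE w. w \<in> fuzzy_numbers \<and>
      (\<forall>\<alpha>\<in>{0..1}. acut w \<alpha> = {r *\<^sub>R x | x. x \<in> acut u \<alpha>}))"

text \<open>Sendograph, a subset of R^p \<times> R (product metric on 'a \<times> real is Euclidean).\<close>

definition send :: "('a::euclidean_space \<Rightarrow> real) \<Rightarrow> ('a \<times> real) set" where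
  "send u = {(x, \<alpha>). x \<in> acut u 0 \<and> \<alpha> \<in> {0..1} \<and> u x \<ge> \<alpha>}"

definition hausdorff_semi :: "('b::metric_space) set \<Rightarrow> 'b set \<Rightarrow> real" where
  "hausdorff_semi U V = (SUP a\<in>U. INF b\<in>V. dist a b)"

definition hausdorff :: "('b::metric_space) set \<Rightarrow> 'b set \<Rightarrow> real" where
  "hausdorff U V = max (hausdorff_semi U V) (hausdorff_semi V U)"

definition send_metric :: "('a::euclidean_space \<Rightarrow> real) \<Rightarrow> ('a \<Rightarrow> real) \<Rightarrow> real" where
  "send_metric u v = hausdorff (send u) (send v)"

end

theory Submission
  imports Defs
begin

lemma acut_pos: "\<beta> > 0 \<Longrightarrow> acut u \<beta> = {x. u x \<ge> \<beta>}"
  by (simp add: acut_def)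

lemma acut_mono: "0 \<le> \<gamma> \<Longrightarrow> \<gamma> \<le> \<beta> \<Longrightarrow> acut u \<beta> \<subseteq> acut u \<gamma>"
proof (cases "\<gamma> = 0")
  case True
  assume "0 \<le> \<gamma>" "\<gamma> \<le> \<beta>"
  show ?thesis
  proof (cases "\<beta> = 0")
    case False
    then have "acut u \<beta> \<subseteq> {x. u x > 0}" using \<open>0 \<le> \<gamma>\<close> \<open>\<gamma> \<le> \<beta>\<close> by (auto simp: acut_def)
    also have "\<dots> \<subseteq> closure {x. u x > 0}" by (rule closure_subset)
    finally show ?thesis using True by (simp add: acut_def)
  qed (use True in simp)
next
  case False
  assume "0 \<le> \<gamma>" "\<gamma> \<le> \<beta>"
  then show ?thesis using False by (auto simp: acut_def)
qed

lemma fn_cut: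
  assumes "u \<in> fuzzy_numbers" "0 \<le> \<beta>" "\<beta> \<le> 1"
  shows "acut u \<beta> \<noteq> {}" "compact (acut u \<beta>)" "convex (acut u \<beta>)"
  using assms by (auto simp: fuzzy_numbers_def)

lemma fn_range: "u \<in> fuzzy_numbers \<Longrightarrow> 0 \<le> u x \<and> u x \<le> 1"
  by (auto simp: fuzzy_numbers_def fuzzy_subset_def)

lemma fn_unique:
  fixes u v :: "'a::euclidean_space \<Rightarrow> real"
  assumes "u \<in> fuzzy_numbers" "v \<in> fuzzy_numbers"
    and "\<forall>\<beta>\<in>{0..1}. acut u \<beta> = acut v \<beta>"
  shows "u = v"
proof
  fix z
  have le: "a z \<le> b z" if "a \<in> fuzzy_numbers" "b \<in> fuzzy_numbers"
      "\<forall>\<beta>\<in>{0..1}. acut a \<beta> = acut b \<beta>" for a b :: "'a \<Rightarrow> real"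
  proof (cases "a z > 0")
    case True
    have "a z \<le> 1" using fn_range[OF that(1)] by auto
    then have "acut a (a z) = acut b (a z)" using that(3) True by auto
    moreover have "z \<in> acut a (a z)" using True by (simp add: acut_def)
    ultimately show ?thesis using True by (simp add: acut_def)
  next
    case False
    then show ?thesis using fn_range[OF that(2), of z] by auto
  qed
  show "u z = v z" using le[OF assms] le[OF assms(2,1)] assms(3) by (metis antisym)
qed

lemma exists_fn:
  fixes A :: "real \<Rightarrow> 'a::euclidean_space set"
  assumes A: "\<And>\<beta>. 0 \<le> \<beta> \<Longrightarrow> \<beta> \<le> 1 \<Longrightarrow> A \<beta> \<noteq> {} \<and> compact (A \<beta>) \<and> convex (A \<beta>)"
    and mono: "\<And>\<gamma> \<beta>. 0 \<le> \<gamma> \<Longrightarrow> \<gamma> \<le> \<beta> \<Longrightarrow> \<beta> \<le> 1 \<Longrightarrow> A \<beta> \<subseteq> A \<gamma>"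
    and inter: "\<And>\<beta> z. 0 < \<beta> \<Longrightarrow> \<beta> \<le> 1 \<Longrightarrow> (\<And>\<gamma>. 0 < \<gamma> \<Longrightarrow> \<gamma> < \<beta> \<Longrightarrow> z \<in> A \<gamma>) \<Longrightarrow> z \<in> A \<beta>"
    and clos: "A 0 \<subseteq> closure (\<Union>\<beta>\<in>{0<..1}. A \<beta>)"
  shows "\<exists>w\<in>fuzzy_numbers. \<forall>\<beta>\<in>{0..1}. acut w \<beta> = A \<beta>"
proof -
  define S where "S z = {\<beta>\<in>{0<..1}. z \<in> A \<beta>}" for z
  define w where "w z = (if S z = {} then 0 else Sup (S z))" for z
  have bdd: "bdd_above (S z)" for z unfolding S_def by (rule bdd_aboveI[of _ 1]) auto
  have key: "w z \<ge> \<beta> \<longleftrightarrow> z \<in> A \<beta>" if b: "0 < \<beta>" "\<beta> \<le> 1" for z \<beta>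
  proof
    assume "z \<in> A \<beta>"
    then have "\<beta> \<in> S z" using b by (simp add: S_def)
    then show "w z \<ge> \<beta>" using cSup_upper[OF _ bdd] by (auto simp: w_def)
  next
    assume h: "w z \<ge> \<beta>"
    then have ne: "S z \<noteq> {}" using b by (auto simp: w_def)
    then have sup: "Sup (S z) \<ge> \<beta>" using h by (simp add: w_def)
    show "z \<in> A \<beta>"
    proof (rule inter[OF b])
      fix \<gamma> assume g: "0 < \<gamma>" "\<gamma> < \<beta>"
      then have "\<gamma> < Sup (S z)" using sup by linarith
      then obtain \<gamma>' where "\<gamma>' \<in> S z" "\<gamma> < \<gamma>'" using less_cSup_iff[OF ne bdd] by blast
      then show "z \<in> A \<gamma>" using mono[of \<gamma> \<gamma>'] g by (auto simp: S_def)
    qed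
  qed
  have pos: "w z > 0 \<longleftrightarrow> z \<in> (\<Union>\<beta>\<in>{0<..1}. A \<beta>)" for z
  proof
    assume "w z > 0"
    then have "S z \<noteq> {}" by (auto simp: w_def)
    then show "z \<in> (\<Union>\<beta>\<in>{0<..1}. A \<beta>)" by (auto simp: S_def)
  next
    assume "z \<in> (\<Union>\<beta>\<in>{0<..1}. A \<beta>)"
    then obtain \<beta> where "0 < \<beta>" "\<beta> \<le> 1" "z \<in> A \<beta>" by auto
    then show "w z > 0" using key[of \<beta> z] by linarith
  qed
  have cut: "acut w \<beta> = A \<beta>" if "0 \<le> \<beta>" "\<beta> \<le> 1" for \<beta>
  proof (cases "\<beta> = 0")
    case True
    have "{x. w x > 0} = (\<Union>\<beta>\<in>{0<..1}. A \<beta>)" using pos by blast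
    moreover have "closure (\<Union>\<beta>\<in>{0<..1}. A \<beta>) \<subseteq> A 0"
    proof (rule closure_minimal)
      show "(\<Union>\<beta>\<in>{0<..1}. A \<beta>) \<subseteq> A 0" using mono[of 0] less_imp_le by (metis (no_types, lifting) UN_least greaterThanAtMost_iff order_refl)
      show "closed (A 0)" using A[of 0] compact_imp_closed by auto
    qed
    ultimately show ?thesis using True clos by (auto simp: acut_def)
  next
    case False
    then show ?thesis using key[of \<beta>] that by (auto simp: acut_def)
  qed
  have fs: "fuzzy_subset w" unfolding fuzzy_subset_def
  proof
    fix z
    show "0 \<le> w z \<and> w z \<le> 1"
    proof (cases "S z = {}")
      case False
      then obtain b where "b \<in> S z" by auto
      then have "b \<le> Sup (S z)" "0 < b" using cSup_upper[OF _ bdd] by (auto simp: S_def)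
      moreover have "Sup (S z) \<le> 1" using False by (intro cSup_least) (auto simp: S_def)
      ultimately show ?thesis using False by (auto simp: w_def)
    qed (simp add: w_def)
  qed
  have "w \<in> fuzzy_numbers" using fs cut A by (auto simp: fuzzy_numbers_def)
  then show ?thesis using cut by (intro bexI[of _ w]) auto
qed

lemma unique_fn:
  assumes "\<exists>w\<in>fuzzy_numbers. \<forall>\<beta>\<in>{0..1}. acut w \<beta> = A \<beta>"
  shows "\<exists>!w. w \<in> fuzzy_numbers \<and> (\<forall>\<beta>\<in>{0..1}. acut w \<beta> = A \<beta>)"
  using assms fn_unique by (metis (no_types, lifting))

lemma sup_lemma: "0 < (\<beta>::real) \<Longrightarrow> (\<And>\<gamma>. 0 < \<gamma> \<Longrightarrow> \<gamma> < \<beta> \<Longrightarrow> \<gamma> \<le> t) \<Longrightarrow> \<beta> \<le> t"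
  by (rule dense_le_bounded[of 0]) auto

lemma fadd_prop:
  fixes u v :: "'a::euclidean_space \<Rightarrow> real"
  assumes u: "u \<in> fuzzy_numbers" and v: "v \<in> fuzzy_numbers"
  shows "fadd u v \<in> fuzzy_numbers \<and> (\<forall>\<beta>\<in>{0..1}. acut (fadd u v) \<beta> =
            {x + y | x y. x \<in> acut u \<beta> \<and> y \<in> acut v \<beta>})"
proof -
  define A where "A \<beta> = {x + y | x y. x \<in> acut u \<beta> \<and> y \<in> acut v \<beta>}" for \<beta>
  have "\<exists>w\<in>fuzzy_numbers. \<forall>\<beta>\<in>{0..1}. acut w \<beta> = A \<beta>"
  proof (rule exists_fn)
    fix \<beta> :: real assume b: "0 \<le> \<beta>" "\<beta> \<le> 1"
    note cu = fn_cut[OF u b] and cv = fn_cut[OF v b]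
    have "A \<beta> \<noteq> {}" using cu(1) cv(1) by (auto simp: A_def)
    moreover have "compact (A \<beta>)" unfolding A_def by (rule compact_sums[OF cu(2) cv(2)])
    moreover have "A \<beta> = (\<Union>x\<in>acut u \<beta>. \<Union>y\<in>acut v \<beta>. {x + y})" by (auto simp: A_def)
    then have "convex (A \<beta>)" using convex_sums[OF cu(3) cv(3)] by simp
    ultimately show "A \<beta> \<noteq> {} \<and> compact (A \<beta>) \<and> convex (A \<beta>)" by blast
  next
    fix \<gamma> \<beta> :: real assume "0 \<le> \<gamma>" "\<gamma> \<le> \<beta>" "\<beta> \<le> 1"
    then show "A \<beta> \<subseteq> A \<gamma>" using acut_mono[of \<gamma> \<beta> u] acut_mono[of \<gamma> \<beta> v]
      unfolding A_def by blast
  next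
    fix \<beta> :: real and z
    assume b: "0 < \<beta>" "\<beta> \<le> 1" and h: "\<And>\<gamma>. 0 < \<gamma> \<Longrightarrow> \<gamma> < \<beta> \<Longrightarrow> z \<in> A \<gamma>"
    define P where "P \<gamma> = acut u \<gamma> \<inter> (\<lambda>y. z - y) ` acut v \<gamma>" for \<gamma>
    define F where "F = P ` {0<..<\<beta>}"
    have cP: "compact (P \<gamma>)" if "0 < \<gamma>" "\<gamma> < \<beta>" for \<gamma>
    proof -
      have g: "0 \<le> \<gamma>" "\<gamma> \<le> 1" using that b by auto
      have "compact ((\<lambda>y. z - y) ` acut v \<gamma>)"
        by (rule compact_continuous_image) (auto intro!: continuous_intros fn_cut[OF v g])
      then show ?thesis unfolding P_def
        using compact_Int_closed[OF fn_cut(2)[OF u g] compact_imp_closed] by blast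
    qed
    have neP: "P \<gamma> \<noteq> {}" if "0 < \<gamma>" "\<gamma> < \<beta>" for \<gamma>
    proof -
      from h[OF that] obtain x y where "x \<in> acut u \<gamma>" "y \<in> acut v \<gamma>" "z = x + y"
        by (auto simp: A_def)
      then have "x \<in> P \<gamma>" unfolding P_def by (auto intro!: image_eqI[of _ _ y])
      then show ?thesis by auto
    qed
    have chain: "S \<subseteq> T \<or> T \<subseteq> S" if "S \<in> F \<and> T \<in> F" for S T
    proof -
      from that obtain g1 g2 where g: "S = P g1" "T = P g2" "0 < g1" "0 < g2"
        by (auto simp: F_def)
      have "P g2 \<subseteq> P g1" if "0 \<le> g1" "g1 \<le> g2" for g1 g2 :: real
        unfolding P_def using acut_mono[OF that, of u] acut_mono[OF that, of v]
        by blast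
      then show ?thesis using g by (metis linear less_imp_le)
    qed
    have "\<Inter>F \<noteq> {}"
      by (rule compact_chain) (use cP neP chain in \<open>auto simp: F_def\<close>, use neP in force)
    then obtain x where x: "\<And>\<gamma>. 0 < \<gamma> \<Longrightarrow> \<gamma> < \<beta> \<Longrightarrow> x \<in> P \<gamma>"
    proof -
      obtain x where "x \<in> \<Inter>F" using \<open>\<Inter>F \<noteq> {}\<close> by blast
      then have "\<And>\<gamma>. 0 < \<gamma> \<Longrightarrow> \<gamma> < \<beta> \<Longrightarrow> x \<in> P \<gamma>" unfolding F_def by auto
      then show thesis using that by blast
    qed
    have "\<beta> \<le> u x"
      by (rule sup_lemma[OF b(1)]) (use x in \<open>auto simp: P_def acut_pos\<close>)
    moreover have "\<beta> \<le> v (z - x)"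
    proof (rule sup_lemma[OF b(1)])
      fix \<gamma> :: real assume g: "0 < \<gamma>" "\<gamma> < \<beta>"
      then have "x \<in> (\<lambda>y. z - y) ` acut v \<gamma>" using x by (auto simp: P_def)
      then have "z - x \<in> acut v \<gamma>" by auto
      then show "\<gamma> \<le> v (z - x)" using g by (simp add: acut_pos)
    qed
    ultimately show "z \<in> A \<beta>" using b unfolding A_def acut_pos[OF b(1)]
      by (intro CollectI exI[of _ x] exI[of _ "z - x"]) auto
  next
    have "A 0 = closure {x. u x > 0} + closure {x. v x > 0}"
      by (auto simp: A_def acut_def set_plus_def)
    also have "\<dots> \<subseteq> closure ({x. u x > 0} + {x. v x > 0})" by (rule closure_sum)
    also have "\<dots> \<subseteq> closure (\<Union>\<beta>\<in>{0<..1}. A \<beta>)"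
    proof (rule closure_mono)
      show "{x. u x > 0} + {x. v x > 0} \<subseteq> (\<Union>\<beta>\<in>{0<..1}. A \<beta>)"
      proof
        fix z assume "z \<in> {x. u x > 0} + {x. v x > 0}"
        then obtain x y where xy: "u x > 0" "v y > 0" "z = x + y" by (auto simp: set_plus_def)
        define b where "b = min (u x) (v y)"
        have "0 < b" "b \<le> 1" using xy fn_range[OF u, of x] fn_range[OF v, of y] by (auto simp: b_def)
        moreover have "u x \<ge> b" "v y \<ge> b" by (auto simp: b_def)
        then have "z \<in> A b" using xy \<open>0 < b\<close> unfolding A_def acut_pos[OF \<open>0 < b\<close>]
          by blast
        ultimately show "z \<in> (\<Union>\<beta>\<in>{0<..1}. A \<beta>)" by auto
      qed
    qed
    finally show "A 0 \<subseteq> closure (\<Union>\<beta>\<in>{0<..1}. A \<beta>)" .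
  qed
  from theI'[OF unique_fn[OF this]] show ?thesis unfolding fadd_def A_def .
qed

lemma fscale_prop:
  fixes u :: "'a::euclidean_space \<Rightarrow> real"
  assumes u: "u \<in> fuzzy_numbers"
  shows "fscale r u \<in> fuzzy_numbers \<and> (\<forall>\<beta>\<in>{0..1}. acut (fscale r u) \<beta> =
            {r *\<^sub>R x | x. x \<in> acut u \<beta>})"
proof -
  define A where "A \<beta> = {r *\<^sub>R x | x. x \<in> acut u \<beta>}" for \<beta>
  have Aim: "A \<beta> = (\<lambda>x. r *\<^sub>R x) ` acut u \<beta>" for \<beta> by (auto simp: A_def)
  have "\<exists>w\<in>fuzzy_numbers. \<forall>\<beta>\<in>{0..1}. acut w \<beta> = A \<beta>"
  proof (rule exists_fn)
    fix \<beta> :: real assume b: "0 \<le> \<beta>" "\<beta> \<le> 1"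
    note cu = fn_cut[OF u b]
    show "A \<beta> \<noteq> {} \<and> compact (A \<beta>) \<and> convex (A \<beta>)"
      unfolding Aim using cu compact_scaling convex_scaling by blast
  next
    fix \<gamma> \<beta> :: real assume "0 \<le> \<gamma>" "\<gamma> \<le> \<beta>" "\<beta> \<le> 1"
    then show "A \<beta> \<subseteq> A \<gamma>" using acut_mono[of \<gamma> \<beta> u] unfolding Aim by blast
  next
    fix \<beta> :: real and z
    assume b: "0 < \<beta>" "\<beta> \<le> 1" and h: "\<And>\<gamma>. 0 < \<gamma> \<Longrightarrow> \<gamma> < \<beta> \<Longrightarrow> z \<in> A \<gamma>"
    show "z \<in> A \<beta>"
    proof (cases "r = 0")
      case True
      have "z \<in> A (\<beta>/2)" using h b by auto
      then have "z = 0" using True by (auto simp: A_def)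
      moreover obtain x where "x \<in> acut u \<beta>" using fn_cut(1)[OF u] b by fastforce
      ultimately show ?thesis using True by (auto simp: A_def)
    next
      case False
      have "\<beta> \<le> u (z /\<^sub>R r)"
      proof (rule sup_lemma[OF b(1)])
        fix \<gamma> :: real assume g: "0 < \<gamma>" "\<gamma> < \<beta>"
        then obtain x where "x \<in> acut u \<gamma>" "z = r *\<^sub>R x" using h by (auto simp: A_def)
        then show "\<gamma> \<le> u (z /\<^sub>R r)" using False g by (simp add: acut_pos)
      qed
      then show ?thesis using False b unfolding A_def acut_pos[OF b(1)]
        by (intro CollectI exI[of _ "z /\<^sub>R r"]) auto
    qed
  next
    have "A 0 = closure ((\<lambda>x. r *\<^sub>R x) ` {x. u x > 0})"
      unfolding Aim using closure_scaleR[of r "{x. u x > 0}"] by (simp add: acut_def)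
    also have "\<dots> \<subseteq> closure (\<Union>\<beta>\<in>{0<..1}. A \<beta>)"
    proof (rule closure_mono)
      show "(\<lambda>x. r *\<^sub>R x) ` {x. u x > 0} \<subseteq> (\<Union>\<beta>\<in>{0<..1}. A \<beta>)"
      proof
        fix z assume "z \<in> (\<lambda>x. r *\<^sub>R x) ` {x. u x > 0}"
        then obtain x where x: "u x > 0" "z = r *\<^sub>R x" by auto
        have "u x \<le> 1" using fn_range[OF u] by auto
        moreover have "z \<in> A (u x)" using x unfolding A_def acut_pos[OF x(1)] by auto
        ultimately show "z \<in> (\<Union>\<beta>\<in>{0<..1}. A \<beta>)" using x by auto
      qed
    qed
    finally show "A 0 \<subseteq> closure (\<Union>\<beta>\<in>{0<..1}. A \<beta>)" .
  qed
  from theI'[OF unique_fn[OF this]] show ?thesis unfolding fscale_def A_def .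
qed

lemma send_eq:
  assumes u: "u \<in> fuzzy_numbers"
  shows "send u = {(x, \<beta>). \<beta> \<in> {0..1} \<and> x \<in> acut u \<beta>}"
proof -
  have "(x, \<beta>) \<in> send u \<longleftrightarrow> \<beta> \<in> {0..1} \<and> x \<in> acut u \<beta>" for x \<beta>
  proof (cases "\<beta> = 0")
    case False
    have "{x. u x \<ge> \<beta>} \<subseteq> acut u 0" if "\<beta> > 0" using acut_mono[of 0 \<beta> u] that
      by (simp add: acut_pos)
    then show ?thesis using False by (auto simp: send_def acut_pos)
  qed (use fn_range[OF u] in \<open>auto simp: send_def acut_def\<close>)
  then show ?thesis by auto
qed

lemma send_compact:
  fixes u :: "'a::euclidean_space \<Rightarrow> real"
  assumes u: "u \<in> fuzzy_numbers"
  shows "compact (send u)" "send u \<noteq> {}"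
proof -
  have eq: "send u = (acut u 0 \<times> {0..1}) \<inter>
     (\<Inter>\<gamma>\<in>{0<..1}. (UNIV \<times> {..\<gamma>}) \<union> (acut u \<gamma> \<times> UNIV))" (is "_ = ?R")
  proof
    show "send u \<subseteq> ?R"
      by (auto simp: send_def acut_pos)
  next
    show "?R \<subseteq> send u"
    proof
      fix p assume p: "p \<in> ?R"
      obtain x \<beta> where xb: "p = (x, \<beta>)" by fastforce
      have x0: "x \<in> acut u 0" and b: "0 \<le> \<beta>" "\<beta> \<le> 1" using p xb by auto
      have h: "\<And>\<gamma>. 0 < \<gamma> \<Longrightarrow> \<gamma> \<le> 1 \<Longrightarrow> \<beta> \<le> \<gamma> \<or> u x \<ge> \<gamma>"
        using p xb by (auto simp: acut_pos)
      have "u x \<ge> \<beta>"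
      proof (rule ccontr)
        assume "\<not> u x \<ge> \<beta>"
        moreover have "u x \<ge> 0" using fn_range[OF u] by auto
        ultimately show False using h[of "(u x + \<beta>)/2"] b by auto
      qed
      then show "p \<in> send u" using xb x0 b by (auto simp: send_def)
    qed
  qed
  have cl: "closed (acut u \<gamma>)" if "0 \<le> \<gamma>" "\<gamma> \<le> 1" for \<gamma>
    using fn_cut(2)[OF u that] compact_imp_closed by blast
  have "closed ?R"
  proof (intro closed_Int closed_INT ballI closed_Un)
    show "closed (acut u 0 \<times> {0..1::real})" using cl[of 0] by (intro closed_Times) auto
  next
    fix \<gamma> :: real assume "\<gamma> \<in> {0<..1}"
    then show "closed (acut u \<gamma> \<times> (UNIV::real set))" using cl[of \<gamma>] by (intro closed_Times) auto
  next
    fix \<gamma> :: real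
    show "closed ((UNIV::'a set) \<times> {..\<gamma>})" by (intro closed_Times) auto
  qed
  moreover have "bounded ?R"
    using fn_cut(2)[OF u, of 0] by (intro bounded_Int disjI1 bounded_Times compact_imp_bounded) auto
  ultimately show "compact (send u)" unfolding eq using compact_eq_bounded_closed by blast
  obtain x where "x \<in> acut u 0" using fn_cut(1)[OF u, of 0] by auto
  then show "send u \<noteq> {}" unfolding send_eq[OF u] by (intro ex_in_conv[THEN iffD1] exI[of _ "(x, 0)"]) auto
qed

lemma semi_le:
  assumes "U \<noteq> {}" "V \<noteq> {}" "\<And>a. a \<in> U \<Longrightarrow> \<exists>b\<in>V. dist a b \<le> R"
  shows "hausdorff_semi U V \<le> R"
  unfolding hausdorff_semi_def
proof (rule cSUP_least[OF assms(1)])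
  fix a assume "a \<in> U"
  then obtain b where "b \<in> V" "dist a b \<le> R" using assms(3) by blast
  then have "infdist a V \<le> R" using infdist_le[of b V a] by linarith
  then show "(INF b\<in>V. dist a b) \<le> R" using assms(2) by (simp add: infdist_notempty)
qed

lemma semi_near:
  fixes U V :: "'b::heine_borel set"
  assumes "compact U" "compact V" "V \<noteq> {}" "a \<in> U"
  shows "\<exists>b\<in>V. dist a b \<le> hausdorff_semi U V"
proof -
  have "compact ((\<lambda>a. infdist a V) ` U)"
    by (rule compact_continuous_image) (auto intro!: continuous_intros assms(1))
  then have bdd: "bdd_above ((\<lambda>a. infdist a V) ` U)"
    by (intro bounded_imp_bdd_above compact_imp_bounded)
  have "infdist a V \<le> (SUP a\<in>U. infdist a V)" by (rule cSUP_upper[OF assms(4) bdd])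
  also have "\<dots> = hausdorff_semi U V" unfolding hausdorff_semi_def
    using assms(3) by (simp add: infdist_notempty)
  finally have le: "infdist a V \<le> hausdorff_semi U V" .
  obtain b where "b \<in> V" "infdist a V = dist a b"
    using infdist_attains_inf[OF compact_imp_closed[OF assms(2)] assms(3)] by blast
  then show ?thesis using le by auto
qed

lemma sqrt_le_sq: "sqrt a \<le> d \<Longrightarrow> 0 \<le> a \<Longrightarrow> a \<le> d\<^sup>2"
proof -
  assume h: "sqrt a \<le> d" "0 \<le> a"
  have "(sqrt a)\<^sup>2 \<le> d\<^sup>2" using h by (intro power_mono) auto
  then show ?thesis using h by simp
qed

lemma key_ineq:
  fixes x x1 y y1 :: "'a::real_normed_vector" and b b1 b2 t :: real
  assumes t: "0 \<le> t" "t \<le> 1"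
    and h1: "dist (x, b) (x1, b1) \<le> d1" and h2: "dist (y, b) (y1, b2) \<le> d2"
  shows "dist (t *\<^sub>R x + (1 - t) *\<^sub>R y, b) (t *\<^sub>R x1 + (1 - t) *\<^sub>R y1, min b1 b2)
           \<le> sqrt (d1\<^sup>2 + d2\<^sup>2)"
proof -
  define p1 where "p1 = dist x x1"
  define p2 where "p2 = dist y y1"
  define q1 where "q1 = dist b b1"
  define q2 where "q2 = dist b b2"
  have e1: "p1\<^sup>2 + q1\<^sup>2 \<le> d1\<^sup>2" using h1 unfolding dist_Pair_Pair p1_def q1_def
    by (intro sqrt_le_sq) auto
  have e2: "p2\<^sup>2 + q2\<^sup>2 \<le> d2\<^sup>2" using h2 unfolding dist_Pair_Pair p2_def q2_def
    by (intro sqrt_le_sq) auto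
  define P where "P = dist (t *\<^sub>R x + (1 - t) *\<^sub>R y) (t *\<^sub>R x1 + (1 - t) *\<^sub>R y1)"
  define Q where "Q = dist b (min b1 b2)"
  have "P = norm (t *\<^sub>R (x - x1) + (1 - t) *\<^sub>R (y - y1))"
    unfolding P_def dist_norm by (simp add: algebra_simps)
  also have "\<dots> \<le> norm (t *\<^sub>R (x - x1)) + norm ((1 - t) *\<^sub>R (y - y1))" by (rule norm_triangle_ineq)
  also have "\<dots> = t * p1 + (1 - t) * p2" using t by (simp add: p1_def p2_def dist_norm)
  also have "\<dots> \<le> t * max p1 p2 + (1 - t) * max p1 p2"
    using t by (intro add_mono mult_left_mono) auto
  finally have P: "P \<le> max p1 p2" by (simp add: algebra_simps)
  have P0: "0 \<le> P" by (simp add: P_def)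
  have "P\<^sup>2 \<le> (max p1 p2)\<^sup>2" using P P0 by (simp add: power_mono)
  also have "\<dots> \<le> p1\<^sup>2 + p2\<^sup>2" by (simp add: max_def)
  finally have PP: "P\<^sup>2 \<le> p1\<^sup>2 + p2\<^sup>2" .
  have "Q \<le> max q1 q2" by (auto simp: Q_def q1_def q2_def dist_real_def min_def max_def)
  then have "Q\<^sup>2 \<le> (max q1 q2)\<^sup>2" by (simp add: power_mono Q_def)
  also have "\<dots> \<le> q1\<^sup>2 + q2\<^sup>2" by (simp add: max_def)
  finally have QQ: "Q\<^sup>2 \<le> q1\<^sup>2 + q2\<^sup>2" .
  have "sqrt (P\<^sup>2 + Q\<^sup>2) \<le> sqrt (d1\<^sup>2 + d2\<^sup>2)"
    using PP QQ e1 e2 by (intro real_sqrt_le_mono) linarith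
  then show ?thesis unfolding dist_Pair_Pair P_def Q_def .
qed

theorem theorem2p1:
  fixes u v w :: "'a::euclidean_space \<Rightarrow> real" and \<alpha> :: real
  assumes "u \<in> fuzzy_numbers" and "v \<in> fuzzy_numbers" and "w \<in> fuzzy_numbers"
    and "\<alpha> \<in> {0..1}"
  shows "send_metric (fadd (fscale \<alpha> u) (fscale (1 - \<alpha>) v)) w
           \<le> sqrt ((send_metric u w)\<^sup>2 + (send_metric v w)\<^sup>2)"
proof -
  note u = assms(1) and v = assms(2) and w = assms(3)
  have t: "0 \<le> \<alpha>" "\<alpha> \<le> 1" using assms(4) by auto
  define s where "s = fadd (fscale \<alpha> u) (fscale (1 - \<alpha>) v)"
  note su = fscale_prop[OF u, of \<alpha>] and sv = fscale_prop[OF v, of "1 - \<alpha>"]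
  have s: "s \<in> fuzzy_numbers" and scut: "\<And>\<beta>. \<beta> \<in> {0..1} \<Longrightarrow> acut s \<beta> =
     {a + b | a b. a \<in> {\<alpha> *\<^sub>R x | x. x \<in> acut u \<beta>} \<and> b \<in> {(1 - \<alpha>) *\<^sub>R x | x. x \<in> acut v \<beta>}}"
    using fadd_prop[OF conjunct1[OF su] conjunct1[OF sv]] su sv unfolding s_def by auto
  note eqs = send_eq[OF u] send_eq[OF v] send_eq[OF w] send_eq[OF s]
  define d1 where "d1 = send_metric u w"
  define d2 where "d2 = send_metric v w"
  define R where "R = sqrt (d1\<^sup>2 + d2\<^sup>2)"
  note cU = send_compact[OF u] and cV = send_compact[OF v] and cW = send_compact[OF w]
    and cS = send_compact[OF s]
  have n1: "\<exists>b\<in>send w. dist a b \<le> d1" if "a \<in> send u" for a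
    using semi_near[OF cU(1) cW(1) cW(2) that]
    unfolding d1_def send_metric_def hausdorff_def by force
  have n2: "\<exists>b\<in>send w. dist a b \<le> d2" if "a \<in> send v" for a
    using semi_near[OF cV(1) cW(1) cW(2) that]
    unfolding d2_def send_metric_def hausdorff_def by force
  have n1': "\<exists>b\<in>send u. dist a b \<le> d1" if "a \<in> send w" for a
    using semi_near[OF cW(1) cU(1) cU(2) that]
    unfolding d1_def send_metric_def hausdorff_def by force
  have n2': "\<exists>b\<in>send v. dist a b \<le> d2" if "a \<in> send w" for a
    using semi_near[OF cW(1) cV(1) cV(2) that]
    unfolding d2_def send_metric_def hausdorff_def by force
  have A: "hausdorff_semi (send s) (send w) \<le> R"
  proof (rule semi_le[OF cS(2) cW(2)])
    fix a assume a: "a \<in> send s"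
    then obtain z \<beta> where zb: "a = (z, \<beta>)" "\<beta> \<in> {0..1}" "z \<in> acut s \<beta>"
      by (auto simp: eqs)
    then obtain x y where xy: "x \<in> acut u \<beta>" "y \<in> acut v \<beta>" "z = \<alpha> *\<^sub>R x + (1 - \<alpha>) *\<^sub>R y"
      using scut[OF zb(2)] by auto
    obtain b1 where b1: "b1 \<in> send w" "dist (x, \<beta>) b1 \<le> d1"
      using n1[of "(x, \<beta>)"] xy zb by (auto simp: eqs)
    obtain b2 where b2: "b2 \<in> send w" "dist (y, \<beta>) b2 \<le> d2"
      using n2[of "(y, \<beta>)"] xy zb by (auto simp: eqs)
    obtain x1 g1 where x1: "b1 = (x1, g1)" "g1 \<in> {0..1}" "x1 \<in> acut w g1"
      using b1 by (auto simp: eqs)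
    obtain y1 g2 where y1: "b2 = (y1, g2)" "g2 \<in> {0..1}" "y1 \<in> acut w g2"
      using b2 by (auto simp: eqs)
    define g where "g = min g1 g2"
    have g: "g \<in> {0..1}" using x1 y1 by (auto simp: g_def)
    have "x1 \<in> acut w g" "y1 \<in> acut w g"
      using acut_mono[of g g1 w] acut_mono[of g g2 w] x1 y1 g by (auto simp: g_def)
    then have "\<alpha> *\<^sub>R x1 + (1 - \<alpha>) *\<^sub>R y1 \<in> acut w g"
      using fn_cut(3)[OF w] g t by (auto intro!: convexD)
    then have "(\<alpha> *\<^sub>R x1 + (1 - \<alpha>) *\<^sub>R y1, g) \<in> send w" using g by (auto simp: eqs)
    moreover have "dist a (\<alpha> *\<^sub>R x1 + (1 - \<alpha>) *\<^sub>R y1, g) \<le> R"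
      unfolding R_def zb(1) xy(3) g_def
      by (rule key_ineq[OF t]) (use b1 b2 x1 y1 in auto)
    ultimately show "\<exists>b\<in>send w. dist a b \<le> R" by blast
  qed
  have B: "hausdorff_semi (send w) (send s) \<le> R"
  proof (rule semi_le[OF cW(2) cS(2)])
    fix a assume a: "a \<in> send w"
    then obtain z \<beta> where zb: "a = (z, \<beta>)" by fastforce
    obtain b1 where b1: "b1 \<in> send u" "dist a b1 \<le> d1" using n1'[OF a] by auto
    obtain b2 where b2: "b2 \<in> send v" "dist a b2 \<le> d2" using n2'[OF a] by auto
    obtain x1 g1 where x1: "b1 = (x1, g1)" "g1 \<in> {0..1}" "x1 \<in> acut u g1"
      using b1 by (auto simp: eqs)
    obtain y1 g2 where y1: "b2 = (y1, g2)" "g2 \<in> {0..1}" "y1 \<in> acut v g2"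
      using b2 by (auto simp: eqs)
    define g where "g = min g1 g2"
    have g: "g \<in> {0..1}" using x1 y1 by (auto simp: g_def)
    have "x1 \<in> acut u g" "y1 \<in> acut v g"
      using acut_mono[of g g1 u] acut_mono[of g g2 v] x1 y1 g by (auto simp: g_def)
    then have "\<alpha> *\<^sub>R x1 + (1 - \<alpha>) *\<^sub>R y1 \<in> acut s g"
      using scut[OF g] by blast
    then have "(\<alpha> *\<^sub>R x1 + (1 - \<alpha>) *\<^sub>R y1, g) \<in> send s" using g by (auto simp: eqs)
    moreover have "dist (\<alpha> *\<^sub>R z + (1 - \<alpha>) *\<^sub>R z, \<beta>) (\<alpha> *\<^sub>R x1 + (1 - \<alpha>) *\<^sub>R y1, g) \<le> R"
      unfolding R_def g_def
      by (rule key_ineq[OF t]) (use b1 b2 x1 y1 zb in auto)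
    moreover have "\<alpha> *\<^sub>R z + (1 - \<alpha>) *\<^sub>R z = z" by (simp add: algebra_simps)
    ultimately show "\<exists>b\<in>send s. dist a b \<le> R" using zb by auto
  qed
  show ?thesis using A B unfolding s_def[symmetric] send_metric_def hausdorff_def
    R_def d1_def d2_def send_metric_def by simp
qed

end
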